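(* Consider the closed-loop data-generating system $$y_t = G(q)S(q) r_t + H(q)S(q) e_t,\qquad u_t = S(q) r_t - K(q)H(q)S(q) e_t,$$ where $q^{-1}$ is the delay operator, $e_t$ is Gaussian white noise with variance $\lambda_e$, $r_t$ is a known external reference signal uncorrelated with $e_t$, $K(q)$ is a stabilizing regulator, $S(q)=[1+K(q)G(q)]^{-1}$, and $$G(q)=\frac{L(q)}{\Gamma(q)F(q)},\qquad H(q)=\frac{C(q)}{\Gamma(q)D(q)},$$ with $L(q)=l_1q^{-1}+\dots+l_{m_l}q^{-m_l}$, $\Gamma(q)=1+\gamma_1q^{-1}+\dots+\gamma_{m_\gamma}q^{-m_\gamma}$, $F(q)=1+f_1q^{-1}+\dots+f_{m_f}q^{-m_f}$, $C(q)=1+c_1q^{-1}+\dots+c_{m_c}q^{-m_c}$, $D(q)=1+d_1q^{-1}+\dots+d_{m_d}q^{-m_d}$ ($m_l,m_\gamma,m_f,m_c,m_d$ finite positive integers). Assume $C(q)$ and $D(q)$ are stable polynomials, $F(q)$ has no roots on the unit circle, $F(q)$ and $D(q)$ are co-prime, and $H(q)$ is stable and inversely stable. Let $J^\star$ be the minimum value, and $\bar A(q)$ the corresponding minimizing $A(q)$, of the cost $$J=\mathbb{E}\left[A(q)y_t-B(q)u_t\right]^2$$ over infinite-order ARX polynomials $A(q)=1+\sum_{k=1}^\infty a_kq^{-k}$ and $B(q)=\sum_{k=1}^\infty b_kq^{-k}$. Let $\bar A_a(q)$ denote the monic polynomial in $q^{-1}$ whose roots are exactly the roots of $\bar A(q)$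 of magnitude larger than one, say $\bar A_a(q)=\prod_{k}(1-p_kq^{-1})$, and let $\bar A_a^*(q)=\prod_k(1-p_k^{-1}q^{-1})$. Then $$H(q)=\frac{1}{\bar A(q)}\frac{\bar A_a(q)}{\bar A_a^*(q)}\qquad\text{and}\qquad \lambda_e=J^\star\left|\frac{\bar A_a^*(e^{i\omega})}{\bar A_a(e^{i\omega})}\right|^2.$$
   Context: A polynomial in $q^{-1}$ is called stable if all its roots (values of $q$ at which it vanishes) lie strictly inside the unit circle; a transfer function is stable (resp. inversely stable) if it (resp. its inverse) has all poles strictly inside the unit circle. Roots of magnitude larger than one are called anti-stable. *)

theory Defs
  imports "HOL-Complex_Analysis.Complex_Analysis" "HOL-Computational_Algebra.Polynomial_Factorial" "HOL-Computational_Algebra.Field_as_Ring"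
begin

text \<open>Polynomials in the delay operator q^{-1}: a real polynomial p represents
  p(q) = coeff p 0 + coeff p 1 * q^{-1} + ... ; evaluation at a complex q.\<close>
definition qev :: "real poly \<Rightarrow> complex \<Rightarrow> complex" where
  "qev p q = poly (map_poly complex_of_real p) (inverse q)"

definition stable_qpoly :: "real poly \<Rightarrow> bool" where
  "stable_qpoly p \<longleftrightarrow> (\<forall>q. q \<noteq> 0 \<longrightarrow> qev p q = 0 \<longrightarrow> cmod q < 1)"

definition tf_stable :: "real poly \<Rightarrow> real poly \<Rightarrow> bool" where
  "tf_stable n d \<longleftrightarrow> (\<forall>q. 1 \<le> cmod q \<longrightarrow> qev (d div gcd n d) q \<noteq> 0)"

text \<open>The causal regulator K = nK/dK internally stabilizes G = L/(Gamma F):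
  all closed-loop poles (roots of the characteristic polynomial) strictly inside the unit circle.\<close>
definition stabilizing :: "real poly \<Rightarrow> real poly \<Rightarrow> real poly \<Rightarrow> real poly \<Rightarrow> real poly \<Rightarrow> bool" where
  "stabilizing L Gam F nK dK \<longleftrightarrow> coeff dK 0 \<noteq> 0 \<and>
     (\<forall>q. 1 \<le> cmod q \<longrightarrow> qev (Gam * F * dK + L * nK) q \<noteq> 0)"

definition Aev :: "(nat \<Rightarrow> real) \<Rightarrow> complex \<Rightarrow> complex" where
  "Aev a q = (\<Sum>k. complex_of_real (a k) * (inverse q) ^ k)"

definition arx_adm :: "(nat \<Rightarrow> real) \<Rightarrow> (nat \<Rightarrow> real) \<Rightarrow> bool" where
  "arx_adm a b \<longleftrightarrow> a 0 = 1 \<and> b 0 = 0 \<and> summable (\<lambda>k. \<bar>a k\<bar>) \<and> summable (\<lambda>k. \<bar>b k\<bar>)"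

definition tfG :: "real poly \<Rightarrow> real poly \<Rightarrow> real poly \<Rightarrow> complex \<Rightarrow> complex" where
  "tfG L Gam F q = qev L q / (qev Gam q * qev F q)"

definition tfH :: "real poly \<Rightarrow> real poly \<Rightarrow> real poly \<Rightarrow> complex \<Rightarrow> complex" where
  "tfH C Gam D q = qev C q / (qev Gam q * qev D q)"

definition tfK :: "real poly \<Rightarrow> real poly \<Rightarrow> complex \<Rightarrow> complex" where
  "tfK nK dK q = qev nK q / qev dK q"

text \<open>The cost J = E[A(q) y_t - B(q) u_t]^2 for the closed-loop data
  y = G S r + H S e, u = S r - K H S e, with r (spectrum Phir) and e
  (white, variance lam) uncorrelated, written via its spectrum (Parseval).\<close>
definition arx_cost ::
  "real poly \<Rightarrow> real poly \<Rightarrow> real poly \<Rightarrow> real poly \<Rightarrow> real poly \<Rightarrow> real poly \<Rightarrow> real poly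
   \<Rightarrow> (real \<Rightarrow> real) \<Rightarrow> real \<Rightarrow> (nat \<Rightarrow> real) \<Rightarrow> (nat \<Rightarrow> real) \<Rightarrow> real" where
  "arx_cost L Gam F C D nK dK Phir lam a b =
     (1 / (2 * pi)) * integral {-pi..pi} (\<lambda>\<omega>.
        let z = cis \<omega>; G = tfG L Gam F z; H = tfH C Gam D z; K = tfK nK dK z;
            S = 1 / (1 + K * G); A = Aev a z; B = Aev b z
        in (cmod (A * G * S - B * S))\<^sup>2 * Phir \<omega> + lam * (cmod ((A + B * K) * H * S))\<^sup>2)"

end

theory Submission
  imports Defs "HOL-Computational_Algebra.Fundamental_Theorem_Algebra"
begin


lemma mean_value_circle:
  fixes f :: "complex \<Rightarrow> complex"
  assumes cf: "continuous_on (cball 0 1) f" and hf: "f holomorphic_on ball 0 1"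
  shows "((\<lambda>\<omega>. f (cis (-\<omega>))) has_integral (2*pi*f 0)) {-pi..pi}"
proof -
  define g where "g = (\<lambda>u. f (-u))"
  have cg: "continuous_on (cball 0 1) g"
    unfolding g_def
    by (rule continuous_on_compose2[OF cf]) (auto intro!: continuous_intros)
  have hg: "g holomorphic_on ball 0 1"
  proof -
    have "(f \<circ> uminus) holomorphic_on ball 0 1"
      by (rule holomorphic_on_compose_gen[OF _ hf]) (auto intro!: holomorphic_intros)
    then show ?thesis by (simp add: g_def o_def)
  qed
  have "((\<lambda>w. g w / (w - 0)) has_contour_integral (2*pi*\<i>*winding_number (circlepath 0 1) 0 * g 0)) (circlepath 0 1)"
  proof (rule Cauchy_integral_formula_convex[where S="cball 0 1" and K="{}"])
    show "\<And>x. x \<in> interior (cball 0 1) - {} \<Longrightarrow> g field_differentiable at x"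
      using hg holomorphic_on_imp_differentiable_at by auto
  qed (auto simp: cg path_image_circlepath)
  then have "((\<lambda>w. g w / w) has_contour_integral (2*pi*\<i>* g 0)) (circlepath 0 1)"
    by (simp add: winding_number_circlepath_centre)
  then have "((\<lambda>x. g (circlepath 0 1 x) / circlepath 0 1 x * vector_derivative (circlepath 0 1) (at x within {0..1}))
      has_integral (2*pi*\<i>* g 0)) {0..1}"
    by (simp add: has_contour_integral_def)
  moreover have "g (circlepath 0 1 x) / circlepath 0 1 x * vector_derivative (circlepath 0 1) (at x within {0..1})
     = (2*pi*\<i>) * g (exp (2 * of_real pi * \<i> * of_real x))" if "x \<in> {0..1}" for x
    using that by (subst vector_derivative_circlepath01) (auto simp: circlepath)
  ultimately have I1: "((\<lambda>x. (2*pi*\<i>) * g (exp (2 * of_real pi * \<i> * of_real x))) has_integral (2*pi*\<i>* g 0)) {0..1}"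
    using has_integral_eq by (metis (no_types, lifting))
  have "((\<lambda>x. g (exp (2 * of_real pi * \<i> * of_real x))) has_integral g 0) {0..1}"
    using has_integral_mult_right[OF I1, where c="inverse (2 * of_real pi * \<i>) :: complex"]
    by (simp add: field_simps)
  moreover have "g (exp (2 * of_real pi * \<i> * of_real x)) = f (cis (- (pi - 2*pi*x)))" for x :: real
  proof -
    have "cis (- (pi - 2*pi*x)) = cis (2*pi*x + (-pi))"
      by (simp add: algebra_simps)
    also have "\<dots> = cis (2*pi*x) * cis (-pi)"
      by (simp only: cis_mult)
    also have "cis (-pi) = -1"
      by (metis cis_inverse cis_pi inverse_minus_eq inverse_1)
    also have "cis (2*pi*x) = exp (2 * of_real pi * \<i> * of_real x)"
      by (simp add: cis_conv_exp mult_ac)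
    finally show ?thesis by (simp add: g_def)
  qed
  ultimately have h: "((\<lambda>x. f (cis (- (pi - 2*pi*x)))) has_integral f 0) (cbox 0 1)"
    by (simp add: g_def)
  have "((\<lambda>y. f (cis (- (pi - 2*pi*((-1/(2*pi)) *\<^sub>R y + 1/2))))) has_integral
        (1 / (\<bar>-1/(2*pi)\<bar> ^ DIM(real))) *\<^sub>R f 0) ((\<lambda>y. (1 / (-1/(2*pi))) *\<^sub>R y + -((1 / (-1/(2*pi))) *\<^sub>R (1/2))) ` cbox 0 1)"
    by (rule has_integral_affinity[OF h]) simp
  moreover have "(\<lambda>y. (1 / (-1/(2*pi))) *\<^sub>R y + -((1 / (-1/(2*pi))) *\<^sub>R (1/2))) ` cbox 0 1 = {-pi..pi}"
  proof -
    have "(\<lambda>y. (1 / (-1/(2*pi))) *\<^sub>R y + -((1 / (-1/(2*pi))) *\<^sub>R (1/2))) = (\<lambda>y::real. (-2*pi) * y + pi)"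
      by (auto simp: field_simps)
    moreover have "(\<lambda>y::real. (-2*pi) * y + pi) ` {0..1} = {-pi..pi}"
      using image_affinity_atLeastAtMost[of "-2*pi" pi 0 1] pi_gt_zero by (simp add: not_le)
    ultimately show ?thesis by simp
  qed
  moreover have "(\<lambda>y. f (cis (- (pi - 2*pi*((-1/(2*pi)) *\<^sub>R y + 1/2))))) = (\<lambda>y. f (cis (-y)))"
    by (auto simp: field_simps)
  ultimately show ?thesis by (simp add: scaleR_conv_of_real)
qed




definition psf :: "(nat \<Rightarrow> real) \<Rightarrow> complex \<Rightarrow> complex" where
  "psf a w = (\<Sum>k. complex_of_real (a k) * w ^ k)"

lemma Aev_psf: "Aev a q = psf a (inverse q)"
  by (simp add: Aev_def psf_def)

lemma psf_sums:
  assumes "summable (\<lambda>k. \<bar>a k\<bar>)" "norm w \<le> 1"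
  shows "(\<lambda>k. complex_of_real (a k) * w ^ k) sums psf a w"
proof -
  have "summable (\<lambda>k. norm (complex_of_real (a k) * w ^ k))"
  proof (rule summable_comparison_test'[OF assms(1)])
    fix n
    have "norm w ^ n \<le> 1" using assms(2) by (simp add: power_le_one)
    then have "\<bar>a n\<bar> * norm w ^ n \<le> \<bar>a n\<bar>" by (simp add: mult_left_le)
    then show "norm (norm (complex_of_real (a n) * w ^ n)) \<le> \<bar>a n\<bar>"
      by (simp add: norm_mult norm_power)
  qed
  then show ?thesis unfolding psf_def
    by (rule summable_sums[OF summable_norm_cancel])
qed

lemma psf_cont:
  assumes "summable (\<lambda>k. \<bar>a k\<bar>)"
  shows "continuous_on (cball 0 1) (psf a)"
proof -
  have ul: "uniform_limit (cball 0 1) (\<lambda>n x. \<Sum>i<n. complex_of_real (a i) * x ^ i)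
      (\<lambda>x. \<Sum>i. complex_of_real (a i) * x ^ i) sequentially"
  proof (rule Weierstrass_m_test[OF _ assms])
    fix n and x :: complex assume "x \<in> cball 0 1"
    then show "norm (complex_of_real (a n) * x ^ n) \<le> \<bar>a n\<bar>"
      by (simp add: norm_mult norm_power mult_left_le power_le_one)
  qed
  show ?thesis unfolding psf_def
    by (rule uniform_limit_theorem[OF _ ul]) (auto intro!: continuous_intros always_eventually)
qed

lemma psf_holo:
  assumes "summable (\<lambda>k. \<bar>a k\<bar>)"
  shows "psf a holomorphic_on ball 0 1"
  by (rule power_series_holomorphic[where a="\<lambda>k. complex_of_real (a k)"])
     (use psf_sums[OF assms] in auto)

lemma psf_0: "psf a 0 = complex_of_real (a 0)"
proof -
  have "(\<lambda>k. complex_of_real (a k) * 0 ^ k) sums complex_of_real (a 0)"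
    using sums_single[of 0 "\<lambda>_. complex_of_real (a 0)"]
    by (rule sums_cong[THEN iffD1, rotated]) (auto simp: power_0_left)
  then show ?thesis unfolding psf_def by (simp add: sums_iff)
qed

lemma taylor_l1:
  fixes f :: "complex \<Rightarrow> complex"
  assumes hf: "f holomorphic_on ball 0 R" and R: "R > 1"
  shows "summable (\<lambda>k. norm ((deriv ^^ k) f 0 / fact k))"
    and "\<And>w. w \<in> ball 0 R \<Longrightarrow> (\<lambda>k. ((deriv ^^ k) f 0 / fact k) * w ^ k) sums f w"
proof -
  show S: "\<And>w. w \<in> ball 0 R \<Longrightarrow> (\<lambda>k. ((deriv ^^ k) f 0 / fact k) * w ^ k) sums f w"
    using holomorphic_power_series[OF hf] by simp
  define x where "x = complex_of_real ((1 + R) / 2)"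
  have nx: "norm x = (1 + R) / 2" using R unfolding x_def norm_of_real by simp
  have "x \<in> ball 0 R" using R nx by simp
  then have "summable (\<lambda>k. ((deriv ^^ k) f 0 / fact k) * x ^ k)"
    using S sums_summable by blast
  moreover have "norm (1::complex) < norm x" using R nx by simp
  ultimately have "summable (\<lambda>k. norm (((deriv ^^ k) f 0 / fact k) * 1 ^ k))"
    by (rule powser_insidea)
  then show "summable (\<lambda>k. norm ((deriv ^^ k) f 0 / fact k))" by simp
qed

lemma real_coeffs:
  fixes c :: "nat \<Rightarrow> complex"
  assumes sc: "summable (\<lambda>k. norm (c k))"
    and sf: "\<And>w. w \<in> cball 0 1 \<Longrightarrow> (\<lambda>k. c k * w ^ k) sums f w"
    and cj: "\<And>w. w \<in> cball 0 1 \<Longrightarrow> f (cnj w) = cnj (f w)"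
  shows "summable (\<lambda>k. \<bar>Re (c k)\<bar>)" and "\<And>w. w \<in> cball 0 1 \<Longrightarrow> psf (\<lambda>k. Re (c k)) w = f w"
proof -
  show "summable (\<lambda>k. \<bar>Re (c k)\<bar>)"
    by (rule summable_comparison_test'[OF sc]) (simp add: abs_Re_le_cmod)
  fix w :: complex assume w: "w \<in> cball 0 1"
  then have w': "cnj w \<in> cball 0 1" by simp
  have "(\<lambda>k. cnj (c k * (cnj w) ^ k)) sums cnj (f (cnj w))"
    using sf[OF w'] by (rule sums_cnj[THEN iffD2])
  then have s2: "(\<lambda>k. cnj (c k) * w ^ k) sums f w"
    using cj[OF w] by simp
  have "(\<lambda>k. (c k * w ^ k + cnj (c k) * w ^ k) / 2) sums ((f w + f w) / 2)"
    by (intro sums_divide sums_add sf[OF w] s2)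
  moreover have "(c k * w ^ k + cnj (c k) * w ^ k) / 2 = complex_of_real (Re (c k)) * w ^ k" for k
  proof -
    have "c k * w ^ k + cnj (c k) * w ^ k = (c k + cnj (c k)) * w ^ k" by (simp add: distrib_right)
    also have "\<dots> = 2 * complex_of_real (Re (c k)) * w ^ k" by (simp add: complex_add_cnj)
    finally show ?thesis by simp
  qed
  ultimately have "(\<lambda>k. complex_of_real (Re (c k)) * w ^ k) sums f w" by simp
  then show "psf (\<lambda>k. Re (c k)) w = f w" unfolding psf_def by (simp add: sums_iff)
qed

lemma pos_times_cont_zero:
  fixes g h :: "real \<Rightarrow> real"
  assumes hc: "continuous_on {a..b} h" and hnn: "\<And>x. x \<in> {a..b} \<Longrightarrow> h x \<ge> 0"
    and gpos: "\<And>x. g x > 0" and int: "((\<lambda>x. g x * h x) has_integral 0) {a..b}"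
    and ab: "a < b" and x: "x \<in> {a..b}"
  shows "h x = 0"
proof -
  let ?f = "\<lambda>x. g x * h x"
  have nonneg: "x \<in> {a..b} \<Longrightarrow> 0 \<le> ?f x" for x using gpos[of x] hnn[of x] by simp
  note intl = has_integral_integrable[OF int]
  have af: "?f absolutely_integrable_on {a..b}"
    using nonneg by (intro absolutely_integrable_onI intl integrable_eq[OF intl]) simp
  have "0 = integral {a..b} ?f" using int by (simp add: integral_unique)
  also have "integral {a..b} ?f = set_lebesgue_integral lebesgue {a..b} ?f"
    using af by (intro set_lebesgue_integral_eq_integral(2)[symmetric])
  also have "\<dots> = 0 \<longleftrightarrow> (AE x in lebesgue. indicator {a..b} x *\<^sub>R ?f x = 0)"
    unfolding set_lebesgue_integral_def
  proof (rule integral_nonneg_eq_0_iff_AE)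
    show "integrable lebesgue (\<lambda>x. indicat_real {a..b} x *\<^sub>R ?f x)"
      by (metis af set_integrable_def)
  qed (use nonneg in \<open>auto simp: indicator_def\<close>)
  finally have "AE x in lebesgue. indicator {a..b} x *\<^sub>R ?f x = 0" by simp
  moreover have imp: "y \<in> {x \<in> {a..b}. h x = 0}"
    if "indicator {a..b} y *\<^sub>R ?f y = 0" "y \<in> {a<..<b}" for y
    using that gpos[of y] by (auto simp: indicator_def split: if_splits)
  ultimately have ae: "AE x \<in> {a<..<b} in lebesgue. x \<in> {x \<in> {a..b}. h x = 0}"
    by eventually_elim (use imp in blast)
  have "closed {x \<in> {a..b}. h x = 0}"
    using continuous_closed_preimage_constant[OF hc] by simp
  then have z: "h y = 0" if "y \<in> {a<..<b}" for y
    using mem_closed_if_AE_lebesgue_open[OF open_greaterThanLessThan _ ae that] by auto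
  have "continuous_on (closure {a<..<b}) h" using hc ab by simp
  from continuous_constant_on_closure[OF this z] show ?thesis using x ab by simp
qed




lemma map_poly_cnj_mult: "map_poly cnj (p * q) = map_poly cnj p * map_poly cnj (q :: complex poly)"
  by (intro poly_eqI) (simp add: coeff_map_poly coeff_mult cnj_sum)

lemma map_poly_cnj_prod_mset: "map_poly cnj (\<Prod>x\<in>#M. f x) = (\<Prod>x\<in>#M. map_poly cnj (f x :: complex poly))"
  by (induction M) (simp_all add: map_poly_cnj_mult)

lemma map_poly_cnj_power: "map_poly cnj (p ^ n) = (map_poly cnj (p :: complex poly)) ^ n"
  by (induction n) (simp_all add: map_poly_cnj_mult)

definition realp :: "complex poly \<Rightarrow> bool" where "realp p \<longleftrightarrow> map_poly cnj p = p"

lemma realp_cnj: "realp p \<Longrightarrow> poly p (cnj w) = cnj (poly p w)"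
  unfolding realp_def by (metis poly_cnj)

lemma realp_of_real: "realp (map_poly complex_of_real p)"
  unfolding realp_def by (simp add: map_poly_map_poly o_def)

lemma realp_mult: "realp p \<Longrightarrow> realp q \<Longrightarrow> realp (p * q)"
  unfolding realp_def by (simp add: map_poly_cnj_mult)

lemma count_image_invol:
  assumes inv: "\<And>y. f (f y) = y"
  shows "count (image_mset f A) x = count A (f x)"
proof (induction A)
  case (add a A)
  have "f a = x \<longleftrightarrow> a = f x" by (metis inv)
  then show ?case using add by simp
qed simp

lemma count_image_cnj: "count (image_mset cnj A) x = count A (cnj x)"
  by (rule count_image_invol) simp

lemma count_image_inverse: "count (image_mset inverse A) x = count A (inverse (x::complex))"
  by (rule count_image_invol) simp

lemma order_cnj_le:
  assumes "realp p" "p \<noteq> 0"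
  shows "order a p \<le> order (cnj a) p"
proof -
  have "[:-a, 1:] ^ order a p dvd p" by (rule order_1)
  then obtain r where r: "p = [:-a, 1:] ^ order a p * r" by (elim dvdE)
  then have "map_poly cnj p = map_poly cnj ([:-a, 1:] ^ order a p) * map_poly cnj r"
    by (metis map_poly_cnj_mult)
  also have "map_poly cnj ([:-a, 1:] ^ order a p) = [:-cnj a, 1:] ^ order a p"
    by (simp add: map_poly_cnj_power map_poly_pCons)
  finally have "p = [:-cnj a, 1:] ^ order a p * map_poly cnj r" using assms(1) unfolding realp_def by simp
  then have "[:-cnj a, 1:] ^ order a p dvd p" by (rule dvdI)
  then show ?thesis using assms(2) by (simp add: order_divides)
qed

lemma order_cnj:
  assumes "realp p" "p \<noteq> 0"
  shows "order (cnj a) p = order a p"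
  using order_cnj_le[OF assms, of a] order_cnj_le[OF assms, of "cnj a"] by simp

lemma proots_cnj:
  assumes "realp p"
  shows "image_mset cnj (proots p) = proots p"
proof (cases "p = 0")
  case False
  show ?thesis
    by (rule multiset_eqI) (simp add: count_image_cnj False order_cnj[OF assms False])
qed simp

lemma poly_factor_roots:
  fixes p :: "complex poly"
  assumes p0: "poly p 0 = 1"
  shows "0 \<notin># proots p" and "poly p w = (\<Prod>x\<in>#proots p. 1 - w / x)"
proof -
  have pnz: "p \<noteq> 0" using p0 by auto
  show nz: "0 \<notin># proots p" using p0 pnz by simp
  define lc where "lc = lead_coeff p"
  have dec: "poly p z = lc * (\<Prod>x\<in>#proots p. z - x)" for z
  proof -
    have "poly p z = poly (smult (lead_coeff p) (\<Prod>x\<in>#proots p. [:-x, 1:])) z"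
      by (subst complex_poly_decompose_multiset) simp
    then show ?thesis by (simp add: lc_def poly_prod_mset)
  qed
  have e: "z - x = (-x) * (1 - z / x)" if "x \<in># proots p" for x z
    using nz that by (auto simp: field_simps)
  have split: "(\<Prod>x\<in>#proots p. z - x) = (\<Prod>x\<in>#proots p. - x) * (\<Prod>x\<in>#proots p. 1 - z / x)" for z
  proof -
    have "(\<Prod>x\<in>#proots p. z - x) = (\<Prod>x\<in>#proots p. (-x) * (1 - z / x))"
      by (intro arg_cong[where f=prod_mset] image_mset_cong e)
    also have "\<dots> = (\<Prod>x\<in>#proots p. - x) * (\<Prod>x\<in>#proots p. 1 - z / x)"
      by (rule prod_mset.distrib)
    finally show ?thesis .
  qed
  have "1 = lc * (\<Prod>x\<in>#proots p. - x)"
    using dec[of 0] p0 split[of 0] by simp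
  then show "poly p w = (\<Prod>x\<in>#proots p. 1 - w / x)"
    using dec[of w] split[of w] by (simp add: mult.assoc[symmetric])
qed

definition PF :: "complex multiset \<Rightarrow> complex poly" where
  "PF M = (\<Prod>x\<in>#M. [:1, - inverse x:])"
definition PFs :: "complex multiset \<Rightarrow> complex poly" where
  "PFs M = (\<Prod>x\<in>#M. [:1, - x:])"

lemma poly_PF: "poly (PF M) w = (\<Prod>x\<in>#M. 1 - w / x)"
  by (simp add: PF_def poly_prod_mset field_simps)

lemma poly_PFs: "poly (PFs M) w = (\<Prod>x\<in>#M. 1 - x * w)"
  by (simp add: PFs_def poly_prod_mset field_simps)

lemma realp_PF: "image_mset cnj M = M \<Longrightarrow> realp (PF M)"
proof -
  assume M: "image_mset cnj M = M"
  have "map_poly cnj (PF M) = (\<Prod>x\<in>#M. [:1, - inverse (cnj x):])"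
    by (simp add: PF_def map_poly_cnj_prod_mset map_poly_pCons)
  also have "\<dots> = (\<Prod>x\<in>#image_mset cnj M. [:1, - inverse x:])"
    by (simp add: image_mset.compositionality o_def)
  finally show ?thesis using M by (simp add: realp_def PF_def)
qed

lemma realp_PFs: "image_mset cnj M = M \<Longrightarrow> realp (PFs M)"
proof -
  assume M: "image_mset cnj M = M"
  have "map_poly cnj (PFs M) = (\<Prod>x\<in>#M. [:1, - (cnj x):])"
    by (simp add: PFs_def map_poly_cnj_prod_mset map_poly_pCons)
  also have "\<dots> = (\<Prod>x\<in>#image_mset cnj M. [:1, - x:])"
    by (simp add: image_mset.compositionality o_def)
  finally show ?thesis using M by (simp add: realp_def PFs_def)
qed

lemma PF_nz: "PF M \<noteq> 0"
  by (auto simp: PF_def prod_mset_zero_iff)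

lemma PFs_nz: "PFs M \<noteq> 0"
  by (auto simp: PFs_def prod_mset_zero_iff)




lemma norm_prod_mset': "norm (\<Prod>x\<in>#M. f x) = (\<Prod>x\<in>#M. norm (f x :: complex))"
  by (induction M) (simp_all add: norm_mult)

lemma prod_mset_divide': "(\<Prod>x\<in>#M. f x / g x) = (\<Prod>x\<in>#M. f x) / (\<Prod>x\<in>#M. (g x :: 'a :: field))"
  by (induction M) simp_all

lemma prod_mset_pos': "(\<And>x. x \<in># M \<Longrightarrow> f x > 0) \<Longrightarrow> (\<Prod>x\<in>#M. f x) > (0::real)"
  by (induction M) auto

abbreviation cp :: "real poly \<Rightarrow> complex poly" where "cp \<equiv> map_poly complex_of_real"

lemma cp_mult: "cp (p * q) = cp p * cp q"
  by (intro poly_eqI) (simp add: coeff_map_poly coeff_mult of_real_sum)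

lemma cp_add: "cp (p + q) = cp p + cp q"
  by (intro poly_eqI) (simp add: coeff_map_poly)

lemma poly_cp_0: "poly (cp p) 0 = complex_of_real (coeff p 0)"
  by (simp add: poly_0_coeff_0 coeff_map_poly)

lemma qev_eq: "qev p q = poly (cp p) (inverse q)"
  by (simp add: qev_def)

lemma cp_nz: "coeff p 0 \<noteq> 0 \<Longrightarrow> cp p \<noteq> 0"
  by (metis coeff_0 coeff_map_poly of_real_0 of_real_eq_0_iff)

lemma stable_nz:
  assumes "stable_qpoly p" "coeff p 0 = 1" "norm w \<le> 1"
  shows "poly (cp p) w \<noteq> 0"
proof
  assume z: "poly (cp p) w = 0"
  show False
  proof (cases "w = 0")
    case True then show False using z assms(2) by (simp add: poly_cp_0)
  next
    case False
    have "qev p (inverse w) = 0" using z by (simp add: qev_eq)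
    then have "cmod (inverse w) < 1" using assms(1) False unfolding stable_qpoly_def by auto
    moreover have "cmod (inverse w) \<ge> 1" using assms(3) False
      by (simp add: norm_inverse one_le_inverse_iff)
    ultimately show False by simp
  qed
qed

locale setting =
  fixes L Gam F C D nK dK :: "real poly" and Phir :: "real \<Rightarrow> real" and lam :: real
  assumes L0: "coeff L 0 = 0"
   and G0: "coeff Gam 0 = 1" and F0: "coeff F 0 = 1" and C0: "coeff C 0 = 1" and D0: "coeff D 0 = 1"
   and Cst: "stable_qpoly C" and Dst: "stable_qpoly D"
   and Fcirc: "\<forall>q. cmod q = 1 \<longrightarrow> qev F q \<noteq> 0"
   and Hst: "tf_stable C (Gam * D)"
   and Kst: "stabilizing L Gam F nK dK"
   and lam: "lam > 0" and Php: "\<forall>\<omega>. Phir \<omega> > 0" and Phi: "Phir integrable_on {-pi..pi}"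
begin

definition ch where "ch = cp (Gam * F * dK + L * nK)"
definition W where "W = proots (cp F)"
definition Wi where "Wi = filter_mset (\<lambda>x. norm x < 1) W"
definition Wo where "Wo = filter_mset (\<lambda>x. norm x > 1) W"
definition Pr where "Pr = (\<Prod>x\<in>#Wi. norm x)"

lemma dK0: "coeff dK 0 \<noteq> 0" using Kst by (simp add: stabilizing_def)

lemma nz_C: "norm w \<le> 1 \<Longrightarrow> poly (cp C) w \<noteq> 0" by (rule stable_nz[OF Cst C0])
lemma nz_D: "norm w \<le> 1 \<Longrightarrow> poly (cp D) w \<noteq> 0" by (rule stable_nz[OF Dst D0])

lemma ch_0: "poly ch 0 = complex_of_real (coeff dK 0)"
  by (simp add: ch_def poly_cp_0 coeff_mult_0 L0 G0 F0)

lemma ch_eq: "poly ch w = poly (cp Gam) w * poly (cp F) w * poly (cp dK) w + poly (cp L) w * poly (cp nK) w"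
  by (simp add: ch_def cp_mult cp_add)

lemma nz_ch: "norm w \<le> 1 \<Longrightarrow> poly ch w \<noteq> 0"
proof (cases "w = 0")
  case True then show ?thesis using dK0 by (simp add: ch_0)
next
  case False
  assume w: "norm w \<le> 1"
  have "1 \<le> cmod (inverse w)" using w False by (simp add: norm_inverse one_le_inverse_iff)
  then have "qev (Gam * F * dK + L * nK) (inverse w) \<noteq> 0" using Kst by (simp add: stabilizing_def)
  then show ?thesis using False by (simp add: qev_eq ch_def)
qed

lemma nz_Gam: assumes w: "norm w \<le> 1" shows "poly (cp Gam) w \<noteq> 0"
proof
  assume z: "poly (cp Gam) w = 0"
  define g where "g = gcd C (Gam * D)"
  have w0: "w \<noteq> 0" using z G0 by (auto simp: poly_cp_0)
  have e1: "Gam * D = ((Gam * D) div g) * g" unfolding g_def by simp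
  obtain h where e2: "C = g * h" unfolding g_def by (metis gcd_dvd1 dvdE)
  have "poly (cp C) w \<noteq> 0" by (rule nz_C[OF w])
  then have gnz: "poly (cp g) w \<noteq> 0" by (subst (asm) e2) (simp add: cp_mult)
  have "poly (cp (Gam * D)) w = 0" using z by (simp add: cp_mult)
  then have "poly (cp ((Gam * D) div g)) w * poly (cp g) w = 0"
    by (subst (asm) e1) (simp add: cp_mult)
  then have dz: "poly (cp ((Gam * D) div g)) w = 0" using gnz by simp
  have "1 \<le> cmod (inverse w)" using w w0 by (simp add: norm_inverse one_le_inverse_iff)
  then have "qev ((Gam * D) div gcd C (Gam * D)) (inverse w) \<noteq> 0"
    using Hst by (simp add: tf_stable_def)
  then show False using dz by (simp add: qev_eq g_def)
qed

lemma nz_F_circ: "norm w = 1 \<Longrightarrow> poly (cp F) w \<noteq> 0"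
proof -
  assume w: "norm w = 1"
  then have "cmod (inverse w) = 1" by (simp add: norm_inverse)
  then have "qev F (inverse w) \<noteq> 0" using Fcirc by blast
  then show ?thesis by (simp add: qev_eq)
qed

lemma F_poly0: "poly (cp F) 0 = 1" by (simp add: poly_cp_0 F0)

lemma W_facts: "0 \<notin># W" "poly (cp F) w = (\<Prod>x\<in>#W. 1 - w / x)"
  using poly_factor_roots[OF F_poly0] by (simp_all add: W_def)

lemma W_cnj: "image_mset cnj W = W"
  unfolding W_def by (rule proots_cnj[OF realp_of_real])

lemma W_norm: "x \<in># W \<Longrightarrow> norm x \<noteq> 1"
proof
  assume x: "x \<in># W" "norm x = 1"
  have "cp F \<noteq> 0" using F0 by (simp add: cp_nz)
  then have "poly (cp F) x = 0" using x(1) by (simp add: W_def)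
  then show False using nz_F_circ[OF x(2)] by simp
qed

lemma W_split: "W = Wi + Wo"
proof -
  have "W = filter_mset (\<lambda>x. norm x < 1) W + filter_mset (\<lambda>x. \<not> norm x < 1) W"
    by (rule multiset_partition)
  also have "filter_mset (\<lambda>x. \<not> norm x < 1) W = Wo"
    unfolding Wo_def using W_norm by (intro filter_mset_cong) force+
  finally show ?thesis by (simp add: Wi_def)
qed

lemma Wi_cnj: "image_mset cnj Wi = Wi"
proof -
  have "image_mset cnj Wi = filter_mset (\<lambda>x. norm x < 1) (image_mset cnj W)"
    unfolding Wi_def by (subst image_mset_filter_mset_swap[symmetric]) simp
  then show ?thesis using W_cnj by (simp add: Wi_def)
qed

lemma Wo_cnj: "image_mset cnj Wo = Wo"
proof -
  have "image_mset cnj Wo = filter_mset (\<lambda>x. norm x > 1) (image_mset cnj W)"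
    unfolding Wo_def by (subst image_mset_filter_mset_swap[symmetric]) simp
  then show ?thesis using W_cnj by (simp add: Wo_def)
qed

lemma Wi_nz: "x \<in># Wi \<Longrightarrow> x \<noteq> 0" using W_facts(1) by (auto simp: Wi_def)
lemma Wi_lt: "x \<in># Wi \<Longrightarrow> norm x < 1" by (auto simp: Wi_def)
lemma Wo_gt: "x \<in># Wo \<Longrightarrow> norm x > 1" by (auto simp: Wo_def)

lemma F_split: "poly (cp F) w = poly (PF Wi) w * poly (PF Wo) w"
  by (simp add: W_facts poly_PF W_split)

lemma nz_Fas: "norm w \<le> 1 \<Longrightarrow> poly (PFs Wi) w \<noteq> 0"
proof
  assume w: "norm w \<le> 1" and z: "poly (PFs Wi) w = 0"
  then obtain x where x: "x \<in># Wi" "1 - x * w = 0" by (auto simp: poly_PFs prod_mset_zero_iff)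
  then have "norm (x * w) = 1" by (metis eq_iff_diff_eq_0 norm_one)
  moreover have "norm (x * w) < 1"
  proof -
    have "norm x * norm w \<le> norm x" using w by (simp add: mult_left_le)
    then show ?thesis using Wi_lt[OF x(1)] by (simp add: norm_mult)
  qed
  ultimately show False by simp
qed

lemma nz_Fs: "norm w \<le> 1 \<Longrightarrow> poly (PF Wo) w \<noteq> 0"
proof
  assume w: "norm w \<le> 1" and z: "poly (PF Wo) w = 0"
  then obtain x where x: "x \<in># Wo" "1 - w / x = 0" by (auto simp: poly_PF prod_mset_zero_iff)
  then have "w = x" using Wo_gt[OF x(1)] by (auto simp: field_simps)
  then show False using Wo_gt[OF x(1)] w by simp
qed

lemma Pr_pos: "Pr > 0"
  unfolding Pr_def using Wi_nz by (intro prod_mset_pos') auto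

lemma Fa_circ:
  assumes w: "norm w = 1"
  shows "norm (poly (PF Wi) w) = norm (poly (PFs Wi) w) / Pr"
proof -
  have wnz: "w \<noteq> 0" using w by auto
  have a: "norm (1 - w / x) = norm (x - w) / norm x" if "x \<in># Wi" for x
  proof -
    have "1 - w / x = (x - w) / x" using Wi_nz[OF that] by (simp add: field_simps)
    then show ?thesis by (simp add: norm_divide)
  qed
  have b: "norm (1 - x * w) = norm (w - cnj x)" for x
  proof -
    have "w * cnj w = complex_of_real ((norm w)\<^sup>2)" by (rule complex_norm_square[symmetric])
    then have "cnj w * w = 1" using w by (simp add: mult.commute)
    then have "1 - x * w = w * (cnj w - x)" by (simp add: algebra_simps)
    then have "norm (1 - x * w) = norm (cnj w - x)" using w by (simp add: norm_mult)
    also have "\<dots> = norm (cnj (w - cnj x))" by simp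
    also have "\<dots> = norm (w - cnj x)" by (rule complex_mod_cnj)
    finally show ?thesis .
  qed
  have "norm (poly (PF Wi) w) = (\<Prod>x\<in>#Wi. norm (1 - w / x))"
    by (simp add: poly_PF norm_prod_mset' image_mset.compositionality o_def)
  also have "\<dots> = (\<Prod>x\<in>#Wi. norm (x - w) / norm x)"
    by (intro arg_cong[where f=prod_mset] image_mset_cong a)
  also have "\<dots> = (\<Prod>x\<in>#Wi. norm (x - w)) / Pr"
    by (simp add: Pr_def prod_mset_divide')
  also have "(\<Prod>x\<in>#Wi. norm (x - w)) = (\<Prod>x\<in>#Wi. norm (w - cnj x))"
  proof -
    have "(\<Prod>x\<in>#Wi. norm (w - cnj x)) = (\<Prod>x\<in>#image_mset cnj Wi. norm (w - x))"
      by (simp add: image_mset.compositionality o_def)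
    also have "\<dots> = (\<Prod>x\<in>#Wi. norm (w - x))" by (simp add: Wi_cnj)
    also have "\<dots> = (\<Prod>x\<in>#Wi. norm (x - w))" by (simp add: norm_minus_commute)
    finally show ?thesis by simp
  qed
  also have "(\<Prod>x\<in>#Wi. norm (w - cnj x)) = (\<Prod>x\<in>#Wi. norm (1 - x * w))"
    by (intro arg_cong[where f=prod_mset] image_mset_cong b[symmetric])
  also have "\<dots> = norm (poly (PFs Wi) w)"
    by (simp add: poly_PFs norm_prod_mset' image_mset.compositionality o_def)
  finally show ?thesis .
qed

end




lemma alg_base:
  fixes g f dk nk l ch :: "'a::field"
  assumes "g \<noteq> 0" "f \<noteq> 0" "dk \<noteq> 0" "ch = g*f*dk + l*nk" "ch \<noteq> 0"
  shows "1 / (1 + nk / dk * (l / (g * f))) = dk * g * f / ch"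
proof -
  have "1 + nk / dk * (l / (g * f)) = (dk * g * f + nk * l) / (dk * g * f)"
    using assms(1-3) by (simp add: field_simps)
  also have "dk * g * f + nk * l = ch" using assms(4) by (simp add: algebra_simps)
  finally show ?thesis by simp
qed

lemma alg_S:
  fixes A B g f dk nk l ch :: "'a::field"
  assumes "g \<noteq> 0" "f \<noteq> 0" "dk \<noteq> 0" "ch = g*f*dk + l*nk" "ch \<noteq> 0"
  shows "A * (l / (g * f)) * (1 / (1 + nk / dk * (l / (g * f)))) - B * (1 / (1 + nk / dk * (l / (g * f))))
           = dk * (A * l - B * g * f) / ch"
proof -
  have "A * (l / (g * f)) * (dk * g * f / ch) - B * (dk * g * f / ch) = dk * (A * l - B * g * f) / ch"
    using assms(1,2,5) by (simp add: field_simps)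
  then show ?thesis by (simp only: alg_base[OF assms])
qed

lemma alg_E:
  fixes A B g f dk nk l c d ch :: "'a::field"
  assumes "g \<noteq> 0" "f \<noteq> 0" "dk \<noteq> 0" "d \<noteq> 0" "ch = g*f*dk + l*nk" "ch \<noteq> 0"
  shows "(A + B * (nk / dk)) * (c / (g * d)) * (1 / (1 + nk / dk * (l / (g * f))))
           = (A * dk + B * nk) * f * c / (d * ch)"
proof -
  have "(A + B * (nk / dk)) * (c / (g * d)) * (dk * g * f / ch) = (A * dk + B * nk) * f * c / (d * ch)"
    using assms(1-4,6) by (simp add: field_simps)
  then show ?thesis by (simp only: alg_base[OF assms(1-3,5,6)])
qed

lemma alg_E2:
  fixes X Fw Fa Fs Fas Cw Dw chw :: "'a::field"
  assumes "Fw = Fa * Fs" "Fas \<noteq> 0"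
  shows "X * Fw * Cw / (Dw * chw) = (X * Fs * Fas * Cw / (Dw * chw)) * (Fa / Fas)"
  using assms by (simp add: field_simps)

lemma cmod_sq_split: "(cmod E)\<^sup>2 = (cmod (E - 1))\<^sup>2 + 2 * Re E - 1"
  unfolding cmod_power2 by (simp add: power2_eq_square algebra_simps)

context setting begin

definition Ef :: "(nat \<Rightarrow> real) \<Rightarrow> (nat \<Rightarrow> real) \<Rightarrow> complex \<Rightarrow> complex" where
  "Ef a b w = (psf a w * poly (cp dK) w + psf b w * poly (cp nK) w) * poly (PF Wo) w * poly (PFs Wi) w
      * poly (cp C) w / (poly (cp D) w * poly ch w)"

definition Rf :: "(nat \<Rightarrow> real) \<Rightarrow> (nat \<Rightarrow> real) \<Rightarrow> complex \<Rightarrow> complex" where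
  "Rf a b w = poly (cp dK) w * (psf a w * poly (cp L) w - psf b w * poly (cp Gam) w * poly (cp F) w) / poly ch w"

definition integ :: "(nat \<Rightarrow> real) \<Rightarrow> (nat \<Rightarrow> real) \<Rightarrow> real \<Rightarrow> real" where
  "integ a b = (\<lambda>\<omega>.
        let z = cis \<omega>; G = tfG L Gam F z; H = tfH C Gam D z; K = tfK nK dK z;
            S = 1 / (1 + K * G); A = Aev a z; B = Aev b z
        in (cmod (A * G * S - B * S))\<^sup>2 * Phir \<omega> + lam * (cmod ((A + B * K) * H * S))\<^sup>2)"

lemma cost_integ: "arx_cost L Gam F C D nK dK Phir lam a b = (1 / (2 * pi)) * integral {-pi..pi} (integ a b)"
  by (simp add: arx_cost_def integ_def)

lemma integ_eq:
  assumes dk: "poly (cp dK) (cis (-\<omega>)) \<noteq> 0"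
  shows "integ a b \<omega> = Phir \<omega> * (cmod (Rf a b (cis (-\<omega>))))\<^sup>2 + lam / Pr\<^sup>2 * (cmod (Ef a b (cis (-\<omega>))))\<^sup>2"
proof -
  define w where "w = cis (-\<omega>)"
  have nw: "norm w = 1" by (simp add: w_def)
  have n1: "norm w \<le> 1" using nw by simp
  note nz = nz_Gam[OF n1] nz_F_circ[OF nw] nz_D[OF n1] nz_ch[OF n1] nz_C[OF n1] nz_Fas[OF n1] nz_Fs[OF n1]
  have dkw: "poly (cp dK) w \<noteq> 0" using dk by (simp add: w_def)
  have S: "Aev a (cis \<omega>) * tfG L Gam F (cis \<omega>) * (1 / (1 + tfK nK dK (cis \<omega>) * tfG L Gam F (cis \<omega>)))
      - Aev b (cis \<omega>) * (1 / (1 + tfK nK dK (cis \<omega>) * tfG L Gam F (cis \<omega>))) = Rf a b w"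
    unfolding tfG_def tfK_def qev_eq Aev_psf Rf_def cis_inverse w_def[symmetric]
    by (rule alg_S) (use nz dkw ch_eq in auto)
  have E: "(Aev a (cis \<omega>) + Aev b (cis \<omega>) * tfK nK dK (cis \<omega>)) * tfH C Gam D (cis \<omega>) *
      (1 / (1 + tfK nK dK (cis \<omega>) * tfG L Gam F (cis \<omega>)))
      = (psf a w * poly (cp dK) w + psf b w * poly (cp nK) w) * poly (cp F) w * poly (cp C) w / (poly (cp D) w * poly ch w)"
    unfolding tfG_def tfK_def tfH_def qev_eq Aev_psf cis_inverse w_def[symmetric]
    by (rule alg_E) (use nz dkw ch_eq in auto)
  have E2: "(psf a w * poly (cp dK) w + psf b w * poly (cp nK) w) * poly (cp F) w * poly (cp C) w / (poly (cp D) w * poly ch w)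
      = Ef a b w * (poly (PF Wi) w / poly (PFs Wi) w)"
    unfolding Ef_def by (rule alg_E2[OF F_split nz(6)])
  have "cmod (Ef a b w * (poly (PF Wi) w / poly (PFs Wi) w)) = cmod (Ef a b w) / Pr"
    using Fa_circ[OF nw] nz Pr_pos by (simp add: norm_mult norm_divide)
  then have "(cmod (Ef a b w * (poly (PF Wi) w / poly (PFs Wi) w)))\<^sup>2 = (cmod (Ef a b w))\<^sup>2 / Pr\<^sup>2"
    by (simp add: power_divide)
  moreover have "integ a b \<omega> = (cmod (Rf a b w))\<^sup>2 * Phir \<omega> + lam * (cmod (Ef a b w * (poly (PF Wi) w / poly (PFs Wi) w)))\<^sup>2"
    unfolding integ_def Let_def S E E2 by (rule refl)
  ultimately show ?thesis by (simp add: w_def mult.commute)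
qed

lemma negl_dK: "negligible ({\<omega>. poly (cp dK) (cis (-\<omega>)) = 0} \<inter> {-pi..pi})"
proof -
  have pnz: "cp dK \<noteq> 0" using dK0 by (rule cp_nz)
  have fin: "finite {z. poly (cp dK) z = 0}" using pnz by (rule poly_roots_finite)
  have "{\<omega>. poly (cp dK) (cis (-\<omega>)) = 0} \<inter> {-pi..pi} \<subseteq> insert pi ((\<lambda>z. - Arg z) ` {z. poly (cp dK) z = 0})"
  proof
    fix \<omega> assume om: "\<omega> \<in> {\<omega>. poly (cp dK) (cis (-\<omega>)) = 0} \<inter> {-pi..pi}"
    show "\<omega> \<in> insert pi ((\<lambda>z. - Arg z) ` {z. poly (cp dK) z = 0})"
    proof (cases "\<omega> = pi")
      case False
      have "Arg (cis (-\<omega>)) = -\<omega>"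
        by (rule cis_Arg_unique) (use om False in \<open>auto simp: sgn_eq\<close>)
      then have "\<omega> = - Arg (cis (-\<omega>))" by simp
      then show ?thesis using om by blast
    qed simp
  qed
  moreover have "finite (insert pi ((\<lambda>z. - Arg z) ` {z. poly (cp dK) z = 0}))" using fin by simp
  ultimately show ?thesis
    by (meson negligible_finite negligible_subset)
qed

end




lemma cont_circ:
  assumes "continuous_on (cball 0 1) h"
  shows "continuous_on S (\<lambda>\<omega>::real. h (cis (-\<omega>)))"
  by (rule continuous_on_compose2[OF assms]) (auto intro!: continuous_intros)

lemma poly_PF_0: "poly (PF M) 0 = 1" by (simp add: poly_PF)
lemma poly_PFs_0: "poly (PFs M) 0 = 1" by (simp add: poly_PFs)

lemma cost_alg:
  fixes x y z c :: "'a::field"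
  assumes "c \<noteq> 0"
  shows "(1 / c) * (x + y * (z + c)) = y + (x + y * z) / c"
  using assms by (simp add: field_simps)

context setting begin

lemma adm_sum: "arx_adm a b \<Longrightarrow> summable (\<lambda>k. \<bar>a k\<bar>) \<and> summable (\<lambda>k. \<bar>b k\<bar>)"
  by (simp add: arx_adm_def)

lemma cont_Ef: "arx_adm a b \<Longrightarrow> continuous_on (cball 0 1) (Ef a b)"
  unfolding Ef_def using adm_sum[of a b] nz_D nz_ch
  by (auto intro!: continuous_intros psf_cont)

lemma cont_Rf: "arx_adm a b \<Longrightarrow> continuous_on (cball 0 1) (Rf a b)"
  unfolding Rf_def using adm_sum[of a b] nz_ch
  by (auto intro!: continuous_intros psf_cont)

lemma holo_Ef: "arx_adm a b \<Longrightarrow> Ef a b holomorphic_on ball 0 1"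
  unfolding Ef_def using adm_sum[of a b] nz_D nz_ch
  by (auto intro!: holomorphic_intros psf_holo)

lemma Ef_0: "arx_adm a b \<Longrightarrow> Ef a b 0 = 1"
  unfolding Ef_def arx_adm_def using dK0 nz_ch[of 0]
  by (simp add: psf_0 poly_PF_0 poly_PFs_0 poly_cp_0 C0 D0 ch_0)

definition IR where "IR a b = integral {-pi..pi} (\<lambda>\<omega>. Phir \<omega> * (cmod (Rf a b (cis (-\<omega>))))\<^sup>2)"
definition IE where "IE a b = integral {-pi..pi} (\<lambda>\<omega>. (cmod (Ef a b (cis (-\<omega>)) - 1))\<^sup>2)"

lemma IR_int:
  assumes "arx_adm a b"
  shows "((\<lambda>\<omega>. Phir \<omega> * (cmod (Rf a b (cis (-\<omega>))))\<^sup>2) has_integral IR a b) {-pi..pi}"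
proof -
  have c: "continuous_on {-pi..pi} (\<lambda>\<omega>. (cmod (Rf a b (cis (-\<omega>))))\<^sup>2)"
    by (intro continuous_intros cont_circ cont_Rf assms)
  have "Phir absolutely_integrable_on {-pi..pi}"
    using Phi Php by (intro nonnegative_absolutely_integrable_1) (auto simp: less_imp_le)
  moreover have "(\<lambda>\<omega>. (cmod (Rf a b (cis (-\<omega>))))\<^sup>2) \<in> borel_measurable (lebesgue_on {-pi..pi})"
    by (rule continuous_imp_measurable_on_sets_lebesgue[OF c]) simp
  moreover have "bounded ((\<lambda>\<omega>. (cmod (Rf a b (cis (-\<omega>))))\<^sup>2) ` {-pi..pi})"
    by (rule compact_imp_bounded[OF compact_continuous_image[OF c]]) simp
  ultimately have "(\<lambda>\<omega>. (cmod (Rf a b (cis (-\<omega>))))\<^sup>2 * Phir \<omega>) absolutely_integrable_on {-pi..pi}"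
    by (intro absolutely_integrable_bounded_measurable_product_real) auto
  then have "(\<lambda>\<omega>. Phir \<omega> * (cmod (Rf a b (cis (-\<omega>))))\<^sup>2) integrable_on {-pi..pi}"
    by (simp add: absolutely_integrable_on_def mult.commute)
  then show ?thesis unfolding IR_def by (rule integrable_integral)
qed

lemma IE_int:
  assumes "arx_adm a b"
  shows "((\<lambda>\<omega>. (cmod (Ef a b (cis (-\<omega>)) - 1))\<^sup>2) has_integral IE a b) {-pi..pi}"
proof -
  have c: "continuous_on {-pi..pi} (\<lambda>\<omega>. (cmod (Ef a b (cis (-\<omega>)) - 1))\<^sup>2)"
    by (intro continuous_intros cont_circ cont_Ef assms)
  show ?thesis unfolding IE_def by (rule integrable_integral[OF integrable_continuous_interval[OF c]])
qed

lemma IR_nonneg: "arx_adm a b \<Longrightarrow> IR a b \<ge> 0"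
  by (rule has_integral_nonneg[OF IR_int]) (use Php in \<open>auto simp: less_imp_le\<close>)

lemma IE_nonneg: "arx_adm a b \<Longrightarrow> IE a b \<ge> 0"
  by (rule has_integral_nonneg[OF IE_int]) auto

lemma Esq_int:
  assumes "arx_adm a b"
  shows "((\<lambda>\<omega>. (cmod (Ef a b (cis (-\<omega>))))\<^sup>2) has_integral (IE a b + 2 * pi)) {-pi..pi}"
proof -
  have mv: "((\<lambda>\<omega>. Ef a b (cis (-\<omega>))) has_integral (2 * pi * Ef a b 0)) {-pi..pi}"
    by (rule mean_value_circle[OF cont_Ef[OF assms] holo_Ef[OF assms]])
  then have mv1: "((\<lambda>\<omega>. Ef a b (cis (-\<omega>))) has_integral complex_of_real (2 * pi)) {-pi..pi}"
    using Ef_0[OF assms] by simp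
  have "((Re \<circ> (\<lambda>\<omega>. Ef a b (cis (-\<omega>)))) has_integral Re (complex_of_real (2 * pi))) {-pi..pi}"
    by (rule has_integral_linear[OF mv1 bounded_linear_Re])
  then have re: "((\<lambda>\<omega>. Re (Ef a b (cis (-\<omega>)))) has_integral (2 * pi)) {-pi..pi}"
    by (simp add: o_def)
  have one: "((\<lambda>\<omega>. 1::real) has_integral (2 * pi)) {-pi..pi}"
    using has_integral_const_real[of "1::real" "-pi" pi] by simp
  have "((\<lambda>\<omega>. (cmod (Ef a b (cis (-\<omega>)) - 1))\<^sup>2 + 2 * Re (Ef a b (cis (-\<omega>))) - 1) has_integral
          (IE a b + 2 * (2 * pi) - 2 * pi)) {-pi..pi}"
    by (intro has_integral_diff has_integral_add IE_int[OF assms] has_integral_mult_right re one)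
  then have "((\<lambda>\<omega>. (cmod (Ef a b (cis (-\<omega>))))\<^sup>2) has_integral (IE a b + 2 * (2 * pi) - 2 * pi)) {-pi..pi}"
    by (rule has_integral_eq[rotated]) (rule cmod_sq_split[symmetric])
  moreover have eq: "IE a b + 2 * (2 * pi) - 2 * pi = IE a b + 2 * pi" by linarith
  ultimately show ?thesis by (simp only: eq)
qed

lemma cost_formula:
  assumes "arx_adm a b"
  shows "arx_cost L Gam F C D nK dK Phir lam a b = lam / Pr\<^sup>2 + (IR a b + lam / Pr\<^sup>2 * IE a b) / (2 * pi)"
proof -
  have "((\<lambda>\<omega>. Phir \<omega> * (cmod (Rf a b (cis (-\<omega>))))\<^sup>2 + lam / Pr\<^sup>2 * (cmod (Ef a b (cis (-\<omega>))))\<^sup>2)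
          has_integral (IR a b + lam / Pr\<^sup>2 * (IE a b + 2 * pi))) {-pi..pi}"
    by (intro has_integral_add IR_int[OF assms] has_integral_mult_right Esq_int[OF assms])
  then have "(integ a b has_integral (IR a b + lam / Pr\<^sup>2 * (IE a b + 2 * pi))) {-pi..pi}"
  proof (rule has_integral_spike[OF negl_dK, rotated])
    fix \<omega> assume "\<omega> \<in> {-pi..pi} - {\<omega>. poly (cp dK) (cis (-\<omega>)) = 0} \<inter> {-pi..pi}"
    then show "integ a b \<omega> = Phir \<omega> * (cmod (Rf a b (cis (-\<omega>))))\<^sup>2 + lam / Pr\<^sup>2 * (cmod (Ef a b (cis (-\<omega>))))\<^sup>2"
      by (intro integ_eq) auto
  qed
  then have I: "integral {-pi..pi} (integ a b) = IR a b + lam / Pr\<^sup>2 * (IE a b + 2 * pi)"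
    by (rule integral_unique)
  have "arx_cost L Gam F C D nK dK Phir lam a b = (1 / (2 * pi)) * (IR a b + lam / Pr\<^sup>2 * (IE a b + 2 * pi))"
    by (simp only: cost_integ I)
  also have "\<dots> = lam / Pr\<^sup>2 + (IR a b + lam / Pr\<^sup>2 * IE a b) / (2 * pi)"
    by (rule cost_alg) simp
  finally show ?thesis .
qed

end




lemma alg_candR:
  fixes g d fa fas c l fs f :: "'a::field"
  assumes "c \<noteq> 0" "fas \<noteq> 0" "fs \<noteq> 0" "f = fa * fs"
  shows "g * d * fa / (c * fas) * l - d * l / (c * fas * fs) * g * f = 0"
  using assms by (simp add: field_simps)

lemma alg_candE:
  fixes g d fa fas c l fs f dk nk ch :: "'a::field"
  assumes "c \<noteq> 0" "fas \<noteq> 0" "fs \<noteq> 0" "d \<noteq> 0" "ch \<noteq> 0" "f = fa * fs" "ch = g * f * dk + l * nk"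
  shows "(g * d * fa / (c * fas) * dk + d * l / (c * fas * fs) * nk) * fs * fas * c / (d * ch) = 1"
proof -
  have "(g * d * fa / (c * fas) * dk + d * l / (c * fas * fs) * nk) * fs * fas * c / (d * ch)
        = (g * fa * fs * dk + l * nk) / ch"
    using assms(1-5) by (simp add: field_simps)
  also have "g * fa * fs * dk + l * nk = ch" using assms(6,7) by (simp add: algebra_simps)
  finally show ?thesis using assms(5) by simp
qed

context setting begin

definition Den where "Den = cp C * PFs Wi * PF Wo"

definition Acand where "Acand w = poly (cp Gam) w * poly (cp D) w * poly (PF Wi) w / (poly (cp C) w * poly (PFs Wi) w)"
definition Bcand where "Bcand w = poly (cp D) w * poly (cp L) w / (poly (cp C) w * poly (PFs Wi) w * poly (PF Wo) w)"

lemma Den_nz: "Den \<noteq> 0"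
  unfolding Den_def using cp_nz[of C] C0 PF_nz PFs_nz by auto

lemma Den_roots: "poly Den w = 0 \<Longrightarrow> norm w > 1"
  unfolding Den_def using nz_C nz_Fas nz_Fs by (auto simp: not_less[symmetric])

lemma exR: "\<exists>R>1. \<forall>w\<in>ball 0 R. poly Den w \<noteq> 0"
proof -
  define Z where "Z = {w. poly Den w = 0}"
  have fin: "finite Z" unfolding Z_def by (rule poly_roots_finite[OF Den_nz])
  show ?thesis
  proof (cases "Z = {}")
    case True then show ?thesis by (intro exI[of _ 2]) (auto simp: Z_def)
  next
    case False
    define R where "R = Min (norm ` Z)"
    have "R \<in> norm ` Z" unfolding R_def using fin False by (intro Min_in) auto
    then have R1: "R > 1" using Den_roots by (auto simp: Z_def)
    have "\<forall>w\<in>ball 0 R. poly Den w \<noteq> 0"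
    proof (intro ballI notI)
      fix w assume w: "w \<in> ball 0 R" and z: "poly Den w = 0"
      then have "R \<le> norm w" unfolding R_def using fin by (intro Min_le) (auto simp: Z_def)
      then show False using w by simp
    qed
    then show ?thesis using R1 by blast
  qed
qed

definition Rad where "Rad = (SOME R. R > 1 \<and> (\<forall>w\<in>ball 0 R. poly Den w \<noteq> 0))"

lemma Rad: "Rad > 1" "w \<in> ball 0 Rad \<Longrightarrow> poly Den w \<noteq> 0"
  using someI_ex[OF exR[unfolded Bex_def[symmetric]]] unfolding Rad_def
  by (metis (no_types, lifting) exR someI_ex)+

lemma Rad_nz:
  assumes "w \<in> ball 0 Rad"
  shows "poly (cp C) w \<noteq> 0" "poly (PFs Wi) w \<noteq> 0" "poly (PF Wo) w \<noteq> 0"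
  using Rad(2)[OF assms] unfolding Den_def by auto

lemma holo_Acand: "Acand holomorphic_on ball 0 Rad"
  unfolding Acand_def using Rad_nz by (auto intro!: holomorphic_intros)

lemma holo_Bcand: "Bcand holomorphic_on ball 0 Rad"
  unfolding Bcand_def using Rad_nz by (auto intro!: holomorphic_intros)

lemma realp_facts: "realp (cp Gam)" "realp (cp D)" "realp (cp C)" "realp (cp L)"
   "realp (PF Wi)" "realp (PFs Wi)" "realp (PF Wo)"
  by (simp_all add: realp_of_real realp_PF realp_PFs Wi_cnj Wo_cnj)

lemma Acand_cnj: "Acand (cnj w) = cnj (Acand w)"
  unfolding Acand_def by (simp add: realp_cnj[OF realp_facts(1)] realp_cnj[OF realp_facts(2)]
     realp_cnj[OF realp_facts(3)] realp_cnj[OF realp_facts(5)] realp_cnj[OF realp_facts(6)])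

lemma Bcand_cnj: "Bcand (cnj w) = cnj (Bcand w)"
  unfolding Bcand_def by (simp add: realp_cnj[OF realp_facts(2)] realp_cnj[OF realp_facts(3)]
     realp_cnj[OF realp_facts(4)] realp_cnj[OF realp_facts(6)] realp_cnj[OF realp_facts(7)])

definition acand where "acand k = Re ((deriv ^^ k) Acand 0 / fact k)"
definition bcand where "bcand k = Re ((deriv ^^ k) Bcand 0 / fact k)"

lemma cball_sub: "cball 0 1 \<subseteq> ball (0::complex) Rad" using Rad(1) by auto

lemma acand: "summable (\<lambda>k. \<bar>acand k\<bar>)" "w \<in> cball 0 1 \<Longrightarrow> psf acand w = Acand w"
proof -
  note T = taylor_l1[OF holo_Acand Rad(1)]
  have s: "w \<in> cball 0 1 \<Longrightarrow> (\<lambda>k. ((deriv ^^ k) Acand 0 / fact k) * w ^ k) sums Acand w" for w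
    using T(2) cball_sub by auto
  note RC = real_coeffs[OF T(1) s Acand_cnj]
  show "summable (\<lambda>k. \<bar>acand k\<bar>)" using RC(1) by (simp add: acand_def)
  show "w \<in> cball 0 1 \<Longrightarrow> psf acand w = Acand w" using RC(2) by (simp add: acand_def[abs_def])
qed

lemma bcand: "summable (\<lambda>k. \<bar>bcand k\<bar>)" "w \<in> cball 0 1 \<Longrightarrow> psf bcand w = Bcand w"
proof -
  note T = taylor_l1[OF holo_Bcand Rad(1)]
  have s: "w \<in> cball 0 1 \<Longrightarrow> (\<lambda>k. ((deriv ^^ k) Bcand 0 / fact k) * w ^ k) sums Bcand w" for w
    using T(2) cball_sub by auto
  note RC = real_coeffs[OF T(1) s Bcand_cnj]
  show "summable (\<lambda>k. \<bar>bcand k\<bar>)" using RC(1) by (simp add: bcand_def)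
  show "w \<in> cball 0 1 \<Longrightarrow> psf bcand w = Bcand w" using RC(2) by (simp add: bcand_def[abs_def])
qed

lemma cand_adm: "arx_adm acand bcand"
proof -
  have "acand 0 = Re (Acand 0)" by (simp add: acand_def)
  also have "Acand 0 = 1" by (simp add: Acand_def poly_cp_0 G0 D0 C0 poly_PF_0 poly_PFs_0)
  finally have a0: "acand 0 = 1" by simp
  have "bcand 0 = Re (Bcand 0)" by (simp add: bcand_def)
  also have "Bcand 0 = 0" by (simp add: Bcand_def poly_cp_0 L0)
  finally have b0: "bcand 0 = 0" by simp
  show ?thesis unfolding arx_adm_def using a0 b0 acand(1) bcand(1) by simp
qed

lemma cand_R: "w \<in> cball 0 1 \<Longrightarrow> Rf acand bcand w = 0"
proof -
  assume w: "w \<in> cball 0 1"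
  then have n1: "norm w \<le> 1" by simp
  have "psf acand w * poly (cp L) w - psf bcand w * poly (cp Gam) w * poly (cp F) w = 0"
    unfolding acand(2)[OF w] bcand(2)[OF w] Acand_def Bcand_def
    by (rule alg_candR[OF nz_C[OF n1] nz_Fas[OF n1] nz_Fs[OF n1] F_split])
  then show ?thesis by (simp add: Rf_def)
qed

lemma cand_E: "w \<in> cball 0 1 \<Longrightarrow> Ef acand bcand w = 1"
proof -
  assume w: "w \<in> cball 0 1"
  then have n1: "norm w \<le> 1" by simp
  show ?thesis
    unfolding Ef_def acand(2)[OF w] bcand(2)[OF w] Acand_def Bcand_def
    by (rule alg_candE[OF nz_C[OF n1] nz_Fas[OF n1] nz_Fs[OF n1] nz_D[OF n1] nz_ch[OF n1] F_split ch_eq])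
qed

lemma cand_cost: "arx_cost L Gam F C D nK dK Phir lam acand bcand = lam / Pr\<^sup>2"
proof -
  have "IR acand bcand = 0" unfolding IR_def using cand_R by simp
  moreover have "IE acand bcand = 0" unfolding IE_def using cand_E by simp
  ultimately show ?thesis using cost_formula[OF cand_adm] by simp
qed

end




lemma alg_id:
  fixes A B g f fa fs fas c d dk nk l ch :: "'a::field"
  assumes "dk \<noteq> 0" "ch \<noteq> 0" "d \<noteq> 0" "ch = g*f*dk + l*nk" "f = fa*fs"
    and "dk*(A*l - B*g*f)/ch = 0" "(A*dk + B*nk)*fs*fas*c/(d*ch) = 1"
  shows "A*c*fas - g*d*fa = 0"
proof -
  have e1: "A*l = B*g*f" using assms(1,2,6) by simp
  have e2: "(A*dk + B*nk)*fs*fas*c = d*ch" using assms(2,3,7) by (simp add: field_simps)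
  have "A*ch*(c*fas) = g*d*fa*ch" using assms(4,5) e1 e2 by algebra
  then have "A*(c*fas) = g*d*fa" using assms(2) by (metis mult.commute mult_right_cancel mult.assoc)
  then show ?thesis by (simp add: mult.assoc)
qed

context setting begin

definition Phi where
  "Phi a w = psf a w * poly (cp C) w * poly (PFs Wi) w - poly (cp Gam) w * poly (cp D) w * poly (PF Wi) w"

lemma cont_Phi: "summable (\<lambda>k. \<bar>a k\<bar>) \<Longrightarrow> continuous_on (cball 0 1) (Phi a)"
  unfolding Phi_def by (auto intro!: continuous_intros psf_cont)

lemma holo_Phi: "summable (\<lambda>k. \<bar>a k\<bar>) \<Longrightarrow> Phi a holomorphic_on ball 0 1"
  unfolding Phi_def by (auto intro!: holomorphic_intros psf_holo)

lemma opt_IR_IE: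
  assumes adm: "arx_adm a b" and le: "arx_cost L Gam F C D nK dK Phir lam a b \<le> lam / Pr\<^sup>2"
  shows "IR a b = 0" "IE a b = 0"
proof -
  have "(IR a b + lam / Pr\<^sup>2 * IE a b) / (2 * pi) \<le> 0" using le cost_formula[OF adm] by simp
  then have s: "IR a b + lam / Pr\<^sup>2 * IE a b \<le> 0" using pi_gt_zero by (auto simp: divide_le_0_iff)
  have p: "lam / Pr\<^sup>2 > 0" using lam Pr_pos by simp
  have n1: "IR a b \<ge> 0" by (rule IR_nonneg[OF adm])
  have n2: "lam / Pr\<^sup>2 * IE a b \<ge> 0"
    by (intro mult_nonneg_nonneg) (use IE_nonneg[OF adm] p in auto)
  show "IR a b = 0" using s n1 n2 by linarith
  have "lam / Pr\<^sup>2 * IE a b = 0" using s n1 n2 by linarith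
  then show "IE a b = 0" using lam Pr_pos by simp
qed

lemma circ_param: "norm w = 1 \<Longrightarrow> w = cis (- (- Arg w)) \<and> - Arg w \<in> {-pi..pi}"
  using Arg_bounded[of w] cis_Arg[of w] by (cases "w = 0") (auto simp: sgn_eq)

lemma opt_circle:
  assumes adm: "arx_adm a b" and le: "arx_cost L Gam F C D nK dK Phir lam a b \<le> lam / Pr\<^sup>2"
    and w: "norm w = 1"
  shows "Rf a b w = 0" "Ef a b w = 1"
proof -
  define \<omega> where "\<omega> = - Arg w"
  have wc: "w = cis (-\<omega>)" and om: "\<omega> \<in> {-pi..pi}" using circ_param[OF w] by (auto simp: \<omega>_def)
  have hR: "((\<lambda>\<omega>. Phir \<omega> * (cmod (Rf a b (cis (-\<omega>))))\<^sup>2) has_integral 0) {-pi..pi}"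
    using IR_int[OF adm] opt_IR_IE[OF adm le] by simp
  have "(cmod (Rf a b (cis (-\<omega>))))\<^sup>2 = 0"
    by (rule pos_times_cont_zero[OF _ _ _ hR _ om])
       (use Php in \<open>auto intro!: continuous_intros cont_circ cont_Rf adm\<close>)
  then show "Rf a b w = 0" using wc by simp
  have hE: "((\<lambda>\<omega>. 1 * (cmod (Ef a b (cis (-\<omega>)) - 1))\<^sup>2) has_integral 0) {-pi..pi}"
    using IE_int[OF adm] opt_IR_IE[OF adm le] by simp
  have "(cmod (Ef a b (cis (-\<omega>)) - 1))\<^sup>2 = 0"
    by (rule pos_times_cont_zero[where g="\<lambda>_. 1", OF _ _ _ hE _ om])
       (auto intro!: continuous_intros cont_circ cont_Ef adm)
  then show "Ef a b w = 1" using wc by simp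
qed

lemma Psi_zero:
  assumes adm: "arx_adm a b" and le: "arx_cost L Gam F C D nK dK Phir lam a b \<le> lam / Pr\<^sup>2"
    and w: "w \<in> cball 0 1"
  shows "poly (cp dK) w * Phi a w = 0"
proof -
  have sa: "summable (\<lambda>k. \<bar>a k\<bar>)" using adm_sum[OF adm] by simp
  have front: "norm (poly (cp dK) z * Phi a z) \<le> 0" if z: "z \<in> frontier (cball 0 1)" for z
  proof -
    have nz: "norm z = 1" using z by simp
    then have n1: "norm z \<le> 1" by simp
    show ?thesis
    proof (cases "poly (cp dK) z = 0")
      case False
      have "Phi a z = 0" unfolding Phi_def
        by (rule alg_id[where B = "psf b z", OF False nz_ch[OF n1] nz_D[OF n1] ch_eq F_split])
           (use opt_circle[OF adm le nz] in \<open>simp_all add: Rf_def Ef_def\<close>)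
      then show ?thesis by simp
    qed simp
  qed
  have h: "(\<lambda>w. poly (cp dK) w * Phi a w) holomorphic_on interior (cball 0 1)"
    using holo_Phi[OF sa] by (auto intro!: holomorphic_intros)
  have c: "continuous_on (closure (cball 0 1)) (\<lambda>w. poly (cp dK) w * Phi a w)"
    using cont_Phi[OF sa] by (auto intro!: continuous_intros)
  have "norm (poly (cp dK) w * Phi a w) \<le> 0"
    using maximum_modulus_frontier[OF h c bounded_cball front w] by simp
  then show ?thesis by simp
qed

lemma Phi_zero:
  assumes adm: "arx_adm a b" and le: "arx_cost L Gam F C D nK dK Phir lam a b \<le> lam / Pr\<^sup>2"
    and w0: "w0 \<in> cball 0 1"
  shows "Phi a w0 = 0"
proof (cases "poly (cp dK) w0 = 0")
  case False
  then show ?thesis using Psi_zero[OF adm le w0] by simp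
next
  case True
  have sa: "summable (\<lambda>k. \<bar>a k\<bar>)" using adm_sum[OF adm] by simp
  have w00: "w0 \<noteq> 0" using True dK0 by (auto simp: poly_cp_0)
  define r where "r n = 1 - 1 / (real n + 2)" for n :: nat
  define s where "s n = complex_of_real (r n) * w0" for n :: nat
  have r01: "0 \<le> r n \<and> r n \<le> 1" for n unfolding r_def by (simp add: field_simps)
  have s_in: "s n \<in> cball 0 1" for n
  proof -
    have "norm (s n) = \<bar>r n\<bar> * norm w0"
      unfolding s_def by (simp add: norm_mult)
    also have "\<dots> \<le> 1 * 1" using w0 r01[of n] by (intro mult_mono) auto
    finally show ?thesis by simp
  qed
  have inj: "inj s"
  proof (rule injI)
    fix m n assume "s m = s n"
    then have "r m = r n" using w00 by (simp add: s_def)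
    then show "m = n" unfolding r_def by (simp add: field_simps)
  qed
  have fin: "finite (s -` {z. poly (cp dK) z = 0})"
    by (rule finite_vimageI[OF poly_roots_finite[OF cp_nz[OF dK0]] inj])
  have ev: "eventually (\<lambda>n. poly (cp dK) (s n) \<noteq> 0) sequentially"
    unfolding cofinite_eq_sequentially[symmetric] eventually_cofinite using fin by simp
  have ev0: "eventually (\<lambda>n. Phi a (s n) = 0) sequentially"
    using ev by eventually_elim (metis Psi_zero[OF adm le s_in] mult_eq_0_iff)
  have lim_s: "s \<longlonglongrightarrow> w0"
  proof -
    have "(\<lambda>n. 1 / (real n + 2)) \<longlonglongrightarrow> 0"
    proof -
      have "(\<lambda>n. 1 / real (n + 2)) \<longlonglongrightarrow> 0"
        using LIMSEQ_ignore_initial_segment[OF lim_1_over_n, of 2] by simp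
      then show ?thesis by (simp add: add.commute)
    qed
    then have "(\<lambda>n. complex_of_real (1 - 1 / (real n + 2)) * w0) \<longlonglongrightarrow> complex_of_real (1 - 0) * w0"
      by (intro tendsto_intros)
    then show ?thesis by (simp add: s_def[abs_def] r_def)
  qed
  have "(\<lambda>n. Phi a (s n)) \<longlonglongrightarrow> Phi a w0"
    by (rule continuous_on_tendsto_compose[OF cont_Phi[OF sa] lim_s w0]) (use s_in in auto)
  moreover have "(\<lambda>n. Phi a (s n)) \<longlonglongrightarrow> 0"
    using ev0 by (rule tendsto_eventually)
  ultimately show ?thesis using LIMSEQ_unique by blast
qed

lemma psf_opt:
  assumes adm: "arx_adm a b" and le: "arx_cost L Gam F C D nK dK Phir lam a b \<le> lam / Pr\<^sup>2"
    and w: "w \<in> cball 0 1"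
  shows "psf a w = poly (cp Gam) w * poly (cp D) w * poly (PF Wi) w / (poly (cp C) w * poly (PFs Wi) w)"
proof -
  have n1: "norm w \<le> 1" using w by simp
  have "Phi a w = 0" by (rule Phi_zero[OF adm le w])
  then have "psf a w * (poly (cp C) w * poly (PFs Wi) w) = poly (cp Gam) w * poly (cp D) w * poly (PF Wi) w"
    unfolding Phi_def by (simp add: mult.assoc)
  then show ?thesis using nz_C[OF n1] nz_Fas[OF n1] by (simp add: eq_divide_eq)
qed

end




lemma alg_z:
  fixes X Z V T U :: "'a::field"
  shows "X * ((T * U) ^ m * Z) / V = (X * Z * U ^ m / V) * T ^ m"
  by (simp add: power_mult_distrib field_simps)

lemma alg_H:
  fixes A g d fa fas c :: "'a::field"
  assumes "A = g * d * fa / (c * fas)" "A \<noteq> 0" "c \<noteq> 0" "fas \<noteq> 0"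
  shows "c / (g * d) = (1 / A) * (fa / fas)"
proof -
  have "g \<noteq> 0" "d \<noteq> 0" "fa \<noteq> 0" using assms(1,2) by auto
  then show ?thesis using assms by (simp add: field_simps)
qed

context setting begin

lemma PF_split:
  "poly (PF Wi) w = (1 - w / x0) ^ count Wi x0 * poly (PF (filter_mset (\<lambda>x. x \<noteq> x0) Wi)) w"
proof -
  have "Wi = filter_mset (\<lambda>x. x = x0) Wi + filter_mset (\<lambda>x. \<not> x = x0) Wi"
    by (rule multiset_partition)
  also have "filter_mset (\<lambda>x. x = x0) Wi = replicate_mset (count Wi x0) x0"
    by (rule filter_eq_replicate_mset)
  finally have e: "Wi = replicate_mset (count Wi x0) x0 + filter_mset (\<lambda>x. x \<noteq> x0) Wi" by simp
  show ?thesis by (subst e) (simp add: poly_PF)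
qed

lemma zorder_A:
  assumes Aeq: "\<And>q. norm q \<ge> 1 \<Longrightarrow> f q = Acand (inverse q)" and p: "norm p > 1"
  shows "zorder f p = int (count Wi (inverse p))"
proof -
  define x0 where "x0 = inverse p"
  define m where "m = count Wi x0"
  define Wr where "Wr = filter_mset (\<lambda>x. x \<noteq> x0) Wi"
  define S where "S = {q::complex. 1 < norm q}"
  define g where "g q = poly (cp Gam) (inverse q) * poly (cp D) (inverse q) * poly (PF Wr) (inverse q)
       * inverse q ^ m / (poly (cp C) (inverse q) * poly (PFs Wi) (inverse q))" for q
  have p0: "p \<noteq> 0" using p by auto
  have inS: "q \<in> S \<Longrightarrow> norm (inverse q) \<le> 1 \<and> q \<noteq> 0" for q
    by (auto simp: S_def norm_inverse inverse_le_1_iff)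
  have oS: "open S" unfolding S_def by (intro open_Collect_less) (auto intro: continuous_intros)
  have pS: "p \<in> S" using p by (simp add: S_def)
  have hg: "g holomorphic_on S"
    unfolding g_def using inS nz_C nz_Fas by (auto intro!: holomorphic_intros)
  have gp: "g p \<noteq> 0"
  proof -
    have n1: "norm (inverse p) \<le> 1" using inS[OF pS] by simp
    have "poly (PF Wr) (inverse p) \<noteq> 0"
    proof
      assume "poly (PF Wr) (inverse p) = 0"
      then obtain x where x: "x \<in># Wr" "1 - inverse p / x = 0" by (auto simp: poly_PF prod_mset_zero_iff)
      then have "x \<noteq> 0" by auto
      then have "x = inverse p" using x(2) by (simp add: divide_eq_eq eq_iff_diff_eq_0[symmetric] split: if_splits)
      then show False using x(1) by (simp add: Wr_def x0_def)
    qed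
    then show ?thesis unfolding g_def
      using nz_Gam[OF n1] nz_D[OF n1] nz_C[OF n1] nz_Fas[OF n1] p0 by simp
  qed
  have fg: "f w = g w * (w - p) powi (int m)" if w: "w \<in> S" "w \<noteq> p" for w
  proof -
    have w0: "w \<noteq> 0" and n1: "norm (inverse w) \<le> 1" using inS[OF w(1)] by auto
    have e1: "1 - inverse w / x0 = (w - p) * inverse w"
      using w0 by (simp add: x0_def divide_inverse algebra_simps)
    have "f w = Acand (inverse w)" using Aeq w(1) by (simp add: S_def)
    also have "\<dots> = poly (cp Gam) (inverse w) * poly (cp D) (inverse w) *
        (((w - p) * inverse w) ^ m * poly (PF Wr) (inverse w)) / (poly (cp C) (inverse w) * poly (PFs Wi) (inverse w))"
      unfolding Acand_def PF_split[of _ x0] e1 m_def Wr_def by simp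
    also have "\<dots> = g w * (w - p) ^ m" unfolding g_def by (rule alg_z)
    finally show ?thesis by simp
  qed
  have "zorder f p = int m"
    by (rule zorder_eqI[OF oS pS hg gp fg])
  then show ?thesis by (simp add: m_def x0_def)
qed

end

lemma prod_ps1:
  fixes xs :: "complex list"
  shows "(\<Prod>p\<leftarrow>map inverse xs. 1 - p / q) = poly (PF (mset xs)) (inverse q)"
proof -
  have "(\<Prod>p\<leftarrow>map inverse xs. 1 - p / q) = prod_mset (image_mset (\<lambda>x. 1 - inverse x / q) (mset xs))"
    by (simp add: prod_mset_prod_list[symmetric] o_def)
  also have "\<dots> = (\<Prod>x\<in>#mset xs. 1 - inverse q / x)"
    by (simp add: divide_inverse mult.commute)
  finally show ?thesis by (simp add: poly_PF)
qed

lemma prod_ps2: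
  fixes xs :: "complex list"
  shows "(\<Prod>p\<leftarrow>map inverse xs. 1 - 1 / (p * q)) = poly (PFs (mset xs)) (inverse q)"
proof -
  have "(\<Prod>p\<leftarrow>map inverse xs. 1 - 1 / (p * q)) = prod_mset (image_mset (\<lambda>x. 1 - 1 / (inverse x * q)) (mset xs))"
    by (simp add: prod_mset_prod_list[symmetric] o_def)
  also have "\<dots> = (\<Prod>x\<in>#mset xs. 1 - x * inverse q)"
    by (simp add: divide_inverse inverse_mult_distrib)
  finally show ?thesis by (simp add: poly_PFs)
qed

theorem corollary1:
  fixes L Gam F C D nK dK :: "real poly"
    and Phir :: "real \<Rightarrow> real" and lam :: real
    and abar bbar :: "nat \<Rightarrow> real"
  assumes L_form: "coeff L 0 = 0" "L \<noteq> 0"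
    and monic: "coeff Gam 0 = 1" "coeff F 0 = 1" "coeff C 0 = 1" "coeff D 0 = 1"
    and orders: "degree Gam \<ge> 1" "degree F \<ge> 1" "degree C \<ge> 1" "degree D \<ge> 1"
    and C_stable: "stable_qpoly C" and D_stable: "stable_qpoly D"
    and F_circle: "\<forall>q. cmod q = 1 \<longrightarrow> qev F q \<noteq> 0"
    and FD_coprime: "coprime F D"
    and H_stable: "tf_stable C (Gam * D)" and H_inv_stable: "tf_stable (Gam * D) C"
    and K_stab: "stabilizing L Gam F nK dK"
    and lam_pos: "lam > 0"
    and Phir_pos: "\<forall>\<omega>. Phir \<omega> > 0" and Phir_int: "Phir integrable_on {-pi..pi}"
    and adm: "arx_adm abar bbar"
    and minim: "\<forall>a b. arx_adm a b \<longrightarrow>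
         arx_cost L Gam F C D nK dK Phir lam abar bbar \<le> arx_cost L Gam F C D nK dK Phir lam a b"
  shows "\<exists>ps :: complex list.
           (\<forall>p \<in> set ps. cmod p > 1) \<and>
           (\<forall>p. cmod p > 1 \<longrightarrow> int (count_list ps p) = zorder (Aev abar) p) \<and>
           (\<forall>q. cmod q \<ge> 1 \<longrightarrow> Aev abar q \<noteq> 0 \<longrightarrow>
              tfH C Gam D q = (1 / Aev abar q) *
                 ((\<Prod>p\<leftarrow>ps. 1 - p / q) / (\<Prod>p\<leftarrow>ps. 1 - 1 / (p * q)))) \<and>
           (\<forall>\<omega>. lam = arx_cost L Gam F C D nK dK Phir lam abar bbar *
                 (cmod ((\<Prod>p\<leftarrow>ps. 1 - 1 / (p * cis \<omega>)) / (\<Prod>p\<leftarrow>ps. 1 - p / cis \<omega>)))\<^sup>2)"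
proof -
  interpret S: setting L Gam F C D nK dK Phir lam
    using L_form monic C_stable D_stable F_circle H_stable K_stab lam_pos Phir_pos Phir_int
    by unfold_locales auto
  have le: "arx_cost L Gam F C D nK dK Phir lam abar bbar \<le> lam / S.Pr\<^sup>2"
    using minim S.cand_adm S.cand_cost by metis
  have cost: "arx_cost L Gam F C D nK dK Phir lam abar bbar = lam / S.Pr\<^sup>2"
    using S.cost_formula[OF adm] S.opt_IR_IE[OF adm le] by simp
  have Aeq: "Aev abar q = S.Acand (inverse q)" if "norm q \<ge> 1" for q
  proof -
    have "inverse q \<in> cball 0 1" using that by (simp add: norm_inverse inverse_le_1_iff)
    then show ?thesis unfolding Aev_psf S.Acand_def by (rule S.psf_opt[OF adm le])
  qed
  obtain xs where xs: "mset xs = S.Wi" using ex_mset by blast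
  define ps where "ps = map inverse xs"
  have P1: "(\<Prod>p\<leftarrow>ps. 1 - p / q) = poly (PF S.Wi) (inverse q)" for q
    unfolding ps_def prod_ps1 xs ..
  have P2: "(\<Prod>p\<leftarrow>ps. 1 - 1 / (p * q)) = poly (PFs S.Wi) (inverse q)" for q
    unfolding ps_def prod_ps2 xs ..
  show ?thesis
  proof (intro exI[of _ ps] conjI allI impI ballI)
    fix p assume "p \<in> set ps"
    then obtain x where x: "x \<in> set xs" "p = inverse x" by (auto simp: ps_def)
    then have "x \<in># S.Wi" using xs by (metis set_mset_mset)
    then have "norm x < 1" "x \<noteq> 0" using S.Wi_lt S.Wi_nz by auto
    then show "cmod p > 1" using x(2) by (simp add: norm_inverse one_less_inverse_iff)
  next
    fix p :: complex assume p: "cmod p > 1"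
    have "int (count_list ps p) = int (count (image_mset inverse S.Wi) p)"
      by (simp add: ps_def count_mset[symmetric] xs)
    also have "\<dots> = int (count S.Wi (inverse p))" by (simp add: count_image_inverse)
    also have "\<dots> = zorder (Aev abar) p"
      by (rule S.zorder_A[symmetric]) (use Aeq p in auto)
    finally show "int (count_list ps p) = zorder (Aev abar) p" .
  next
    fix q :: complex assume q: "cmod q \<ge> 1" and A0: "Aev abar q \<noteq> 0"
    have n1: "norm (inverse q) \<le> 1" using q by (simp add: norm_inverse inverse_le_1_iff)
    have "tfH C Gam D q = poly (cp C) (inverse q) / (poly (cp Gam) (inverse q) * poly (cp D) (inverse q))"
      by (simp add: tfH_def qev_eq)
    also have "\<dots> = (1 / Aev abar q) * (poly (PF S.Wi) (inverse q) / poly (PFs S.Wi) (inverse q))"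
      by (rule alg_H[OF _ A0 S.nz_C[OF n1] S.nz_Fas[OF n1]]) (simp add: Aeq[OF q] S.Acand_def)
    finally show "tfH C Gam D q = (1 / Aev abar q) *
                 ((\<Prod>p\<leftarrow>ps. 1 - p / q) / (\<Prod>p\<leftarrow>ps. 1 - 1 / (p * q)))"
      by (simp only: P1 P2)
  next
    fix \<omega> :: real
    define w where "w = cis (-\<omega>)"
    have nw: "norm w = 1" by (simp add: w_def)
    have "poly (cp F) w \<noteq> 0" by (rule S.nz_F_circ[OF nw])
    then have Fa0: "poly (PF S.Wi) w \<noteq> 0" by (simp add: S.F_split)
    have "cmod (poly (PFs S.Wi) w / poly (PF S.Wi) w) = S.Pr"
      using S.Fa_circ[OF nw] Fa0 S.Pr_pos by (simp add: norm_divide field_simps)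
    then have "(cmod ((\<Prod>p\<leftarrow>ps. 1 - 1 / (p * cis \<omega>)) / (\<Prod>p\<leftarrow>ps. 1 - p / cis \<omega>)))\<^sup>2 = S.Pr\<^sup>2"
      by (simp only: P1 P2 cis_inverse w_def[symmetric])
    then show "lam = arx_cost L Gam F C D nK dK Phir lam abar bbar *
                 (cmod ((\<Prod>p\<leftarrow>ps. 1 - 1 / (p * cis \<omega>)) / (\<Prod>p\<leftarrow>ps. 1 - p / cis \<omega>)))\<^sup>2"
      using cost S.Pr_pos by simp
  qed
qed



end
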